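(* Let $k\ge1$ and $b_1,\dots,b_k\in\mathbb{F}_q$, and set $(a_1,\dots,a_k):=G(b_1,\dots,b_k)$. Then, as permutations of $\mathbb{P}^1(\mathbb{F}_q)$, $$(b_1,\infty)\circ(b_2,\infty)\circ\cdots\circ(b_k,\infty)=\mu(x)\circ x^{q-2}\circ(x-a_k)\circ x^{q-2}\circ(x-a_{k-1})\circ\cdots\circ x^{q-2}\circ(x-a_1),$$ where $\mu(x):=(x+a_1)\circ x^{-1}\circ(x+a_2)\circ x^{-1}\circ\cdots\circ(x+a_k)\circ x^{-1}$, which is a degree-one rational function in $\mathbb{F}_q(x)$.
   Context: Let $q>2$ be a prime power, $\mathbb{F}_q$ the field with $q$ elements, $\mathbb{P}^1(\mathbb{F}_q)=\mathbb{F}_q\cup\{\infty\}$. Degree-one rational functions in $\mathbb{F}_q(x)$ act on $\mathbb{P}^1(\mathbb{F}_q)$ with the usual conventions (e.g. $x^{-1}$ swaps $0$ and $\infty$, polynomials fix $\infty$). $x^{q-2}$ acts on $\mathbb{P}^1(\mathbb{F}_q)$ by fixing $0$ and $\infty$ and sending $c\in\mathbb{F}_q^*$ to $c^{q-2}=c^{-1}$; for $c\in\mathbb{F}_q$, $c^{q-2}$ also denotes the field element ($0^{q-2}=0$). For $b\in\mathbb{F}_q$, $(b,\infty)$ is the transposition swapping $b$ and $\infty$. Composition is $(f\circ g)(x)=f(g(x))$. For $2\le\ell\le k$ let $\Phi_\ell:\mathbb{F}_q^\ell\to\mathbb{F}_q^{\ell-1}$ send $(e_1,\dots,e_\ell)$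 to $((e_2-e_1)^{q-2},(e_3-e_1)^{q-2},\dots,(e_\ell-e_1)^{q-2})$. The map $G:\mathbb{F}_q^k\to\mathbb{F}_q^k$ sends $(b_1,\dots,b_k)$ to $(a_1,\dots,a_k)$ where $a_i$ is the first entry of $\Phi_{k-i+2}\circ\Phi_{k-i+3}\circ\cdots\circ\Phi_k(b_1,\dots,b_k)\in\mathbb{F}_q^{k-i+1}$ (for $i=1$ this composite is the identity, so $a_1=b_1$). *)

theory Defs
  imports Main "HOL-Library.Cardinality"
begin

text \<open>P^1(F_q) is modelled as 'a option, with None = infinity, Some c = c.
  F_q is a finite field type 'a; q = CARD('a).\<close>

definition p1_transp :: "'a \<Rightarrow> 'a option \<Rightarrow> 'a option" where
  "p1_transp b z = (if z = Some b then None else if z = None then Some b else z)"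

definition p1_pow_qm2 :: "'a::{field,finite} option \<Rightarrow> 'a option" where
  "p1_pow_qm2 z = (case z of None \<Rightarrow> None | Some c \<Rightarrow> Some (c ^ (CARD('a) - 2)))"

definition p1_inv :: "'a::field option \<Rightarrow> 'a option" where
  "p1_inv z = (case z of None \<Rightarrow> Some 0 | Some c \<Rightarrow> (if c = 0 then None else Some (inverse c)))"

definition p1_add :: "'a::field \<Rightarrow> 'a option \<Rightarrow> 'a option" where
  "p1_add a z = (case z of None \<Rightarrow> None | Some c \<Rightarrow> Some (c + a))"

definition p1_mobius :: "'a::field \<Rightarrow> 'a \<Rightarrow> 'a \<Rightarrow> 'a \<Rightarrow> 'a option \<Rightarrow> 'a option" where
  "p1_mobius al be ga de z = (case z of
      None \<Rightarrow> (if ga = 0 then None else Some (al / ga))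
    | Some c \<Rightarrow> (if ga * c + de = 0 then None else Some ((al * c + be) / (ga * c + de))))"

fun Phi :: "'a::{field,finite} list \<Rightarrow> 'a list" where
  "Phi [] = []"
| "Phi (e # es) = map (\<lambda>x. (x - e) ^ (CARD('a) - 2)) es"

definition G :: "'a::{field,finite} list \<Rightarrow> 'a list" where
  "G bs = map (\<lambda>i. hd ((Phi ^^ i) bs)) [0..<length bs]"

definition comp_list :: "('b \<Rightarrow> 'b) list \<Rightarrow> 'b \<Rightarrow> 'b" where
  "comp_list fs = foldr (\<circ>) fs id"

end

theory Submission
  imports Defs
begin

lemma fermat_field:
  fixes c :: "'a::{field,finite}"
  assumes "c \<noteq> 0"
  shows "c ^ (CARD('a) - 1) = 1"
proof -
  let ?S = "UNIV - {0::'a}"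
  have cardS: "card ?S = CARD('a) - 1" by (simp add: card_Diff_singleton)
  have bij: "bij_betw ((*) c) ?S ?S"
    unfolding bij_betw_def
  proof
    show "inj_on ((*) c) ?S" using assms by (auto simp: inj_on_def)
    show "(*) c ` ?S = ?S"
    proof
      show "(*) c ` ?S \<subseteq> ?S" using assms by auto
      show "?S \<subseteq> (*) c ` ?S"
      proof
        fix x assume "x \<in> ?S"
        then have "x = c * (x / c)" "x / c \<in> ?S" using assms by auto
        then show "x \<in> (*) c ` ?S" by blast
      qed
    qed
  qed
  have "prod (\<lambda>x. c * x) ?S = prod id ?S"
    using prod.reindex_bij_betw[OF bij, of id] by simp
  moreover have "prod (\<lambda>x. c * x) ?S = c ^ card ?S * prod id ?S"
    by (simp add: prod.distrib)
  moreover have "prod id ?S \<noteq> 0" by simp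
  ultimately show ?thesis using cardS by simp
qed

lemma pow_inv:
  fixes c :: "'a::{field,finite}"
  assumes "CARD('a) > 2"
  shows "c ^ (CARD('a) - 2) = inverse c"
proof (cases "c = 0")
  case True
  then show ?thesis using assms by simp
next
  case False
  have "c ^ (CARD('a) - 2) * c = c ^ (CARD('a) - 1)"
  proof -
    have "CARD('a) - 1 = Suc (CARD('a) - 2)" using assms by simp
    then show ?thesis by (simp add: power_Suc2)
  qed
  then have "c ^ (CARD('a) - 2) * c = 1" using fermat_field[OF False] by simp
  then show ?thesis using False by (simp add: field_simps)
qed

lemma comp_list_Nil[simp]: "comp_list [] = id" by (simp add: comp_list_def)
lemma comp_list_Cons[simp]: "comp_list (f # fs) = f \<circ> comp_list fs" by (simp add: comp_list_def)
lemma comp_list_append[simp]: "comp_list (xs @ ys) = comp_list xs \<circ> comp_list ys"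
  by (induction xs) auto

lemma G_Nil[simp]: "G [] = []" by (simp add: G_def)

lemma G_Cons: "G (b # bs) = b # G (Phi (b # bs))"
proof -
  have l: "length (Phi (b # bs)) = length bs" by simp
  show ?thesis
    unfolding G_def l by (simp add: map_upt_Suc funpow_Suc_right del: upt_Suc Phi.simps funpow.simps)
qed

lemma conj_transp:
  assumes "inj h" "h None = None" "\<forall>b\<in>set bs. h (Some b) = Some (f b)"
  shows "comp_list (map p1_transp (map f bs)) \<circ> h = h \<circ> comp_list (map p1_transp bs)"
  using assms(3)
proof (induction bs)
  case Nil then show ?case by simp
next
  case (Cons b bs)
  have "p1_transp (f b) \<circ> h = h \<circ> p1_transp b"
  proof
    fix z
    show "(p1_transp (f b) \<circ> h) z = (h \<circ> p1_transp b) z"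
    proof (cases z)
      case None then show ?thesis using assms(2) Cons.prems by (simp add: p1_transp_def)
    next
      case (Some a)
      show ?thesis
      proof (cases "a = b")
        case True then show ?thesis using Some Cons.prems assms(2) by (simp add: p1_transp_def)
      next
        case False
        have "h (Some a) \<noteq> None"
        proof
          assume "h (Some a) = None"
          then have "h (Some a) = h None" using assms(2) by simp
          then show False using injD[OF assms(1)] by blast
        qed
        moreover have "h (Some a) \<noteq> Some (f b)"
        proof
          assume "h (Some a) = Some (f b)"
          then have "h (Some a) = h (Some b)" using Cons.prems by simp
          then have "Some a = Some b" using injD[OF assms(1)] by blast
          then show False using False by simp
        qed
        ultimately show ?thesis using Some False by (auto simp: p1_transp_def)
      qed
    qed
  qed
  then have e: "p1_transp (f b) \<circ> h = h \<circ> p1_transp b" .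
  have IH: "comp_list (map p1_transp (map f bs)) \<circ> h = h \<circ> comp_list (map p1_transp bs)"
  proof (rule Cons.IH)
    show "\<forall>b\<in>set bs. h (Some b) = Some (f b)" using Cons.prems by simp
  qed
  have "comp_list (map p1_transp (map f (b # bs))) \<circ> h
      = p1_transp (f b) \<circ> (comp_list (map p1_transp (map f bs)) \<circ> h)"
    by (simp add: o_assoc)
  also have "\<dots> = (p1_transp (f b) \<circ> h) \<circ> comp_list (map p1_transp bs)"
    unfolding IH by (simp add: o_assoc)
  also have "\<dots> = h \<circ> comp_list (map p1_transp (b # bs))"
    unfolding e by (simp add: o_assoc)
  finally show ?case .
qed

lemma base:
  assumes "CARD('a::{field,finite}) > 2"
  shows "p1_add b \<circ> p1_inv \<circ> (p1_pow_qm2 \<circ> p1_add (- b)) = p1_transp (b::'a)"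
proof
  fix z
  show "(p1_add b \<circ> p1_inv \<circ> (p1_pow_qm2 \<circ> p1_add (- b))) z = p1_transp b z"
    by (cases z) (auto simp: p1_add_def p1_inv_def p1_pow_qm2_def p1_transp_def pow_inv[OF assms])
qed

lemma main:
  fixes bs :: "'a::{field,finite} list"
  assumes "CARD('a) > 2"
  shows "comp_list (map p1_transp bs) = comp_list (map (\<lambda>a. p1_add a \<circ> p1_inv) (G bs))
     \<circ> comp_list (map (\<lambda>a. p1_pow_qm2 \<circ> p1_add (- a)) (rev (G bs)))"
proof (induction "length bs" arbitrary: bs rule: less_induct)
  case less
  show ?case
  proof (cases bs)
    case Nil then show ?thesis by simp
  next
    case (Cons b bs0)
    define f where "f = (\<lambda>x::'a. (x - b) ^ (CARD('a) - 2))"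
    define h where "h = p1_pow_qm2 \<circ> p1_add (- b)"
    have bs': "Phi (b # bs0) = map f bs0" by (simp add: f_def)
    have IH: "comp_list (map p1_transp (map f bs0)) = comp_list (map (\<lambda>a. p1_add a \<circ> p1_inv) (G (map f bs0)))
     \<circ> comp_list (map (\<lambda>a. p1_pow_qm2 \<circ> p1_add (- a)) (rev (G (map f bs0))))"
      using less[of "map f bs0"] Cons by simp
    have hinj: "inj h"
      unfolding h_def inj_def
    proof (intro allI impI)
      fix x y :: "'a option"
      assume "(p1_pow_qm2 \<circ> p1_add (- b)) x = (p1_pow_qm2 \<circ> p1_add (- b)) y"
      then show "x = y"
        by (cases x; cases y) (auto simp: p1_pow_qm2_def p1_add_def pow_inv[OF assms])
    qed
    have hN: "h None = None" by (simp add: h_def p1_pow_qm2_def p1_add_def)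
    have hS: "\<forall>x\<in>set bs0. h (Some x) = Some (f x)"
      by (simp add: h_def f_def p1_pow_qm2_def p1_add_def)
    have C: "comp_list (map p1_transp (map f bs0)) \<circ> h = h \<circ> comp_list (map p1_transp bs0)"
      by (rule conj_transp[OF hinj hN hS])
    have "comp_list (map (\<lambda>a. p1_add a \<circ> p1_inv) (G bs))
     \<circ> comp_list (map (\<lambda>a. p1_pow_qm2 \<circ> p1_add (- a)) (rev (G bs)))
      = p1_add b \<circ> p1_inv \<circ> (comp_list (map p1_transp (map f bs0)) \<circ> h)"
      unfolding Cons G_Cons bs' IH h_def by (simp add: comp_assoc)
    also have "\<dots> = (p1_add b \<circ> p1_inv \<circ> h) \<circ> comp_list (map p1_transp bs0)"
      unfolding C by (simp add: comp_assoc)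
    also have "\<dots> = comp_list (map p1_transp bs)"
      unfolding h_def base[OF assms] Cons by simp
    finally show ?thesis by simp
  qed
qed

lemma mobius_step:
  assumes d: "al * de - be * ga \<noteq> (0::'a::field)"
  shows "p1_add a \<circ> p1_inv \<circ> p1_mobius al be ga de = p1_mobius (ga + a * al) (de + a * be) al be"
proof
  fix z
  show "(p1_add a \<circ> p1_inv \<circ> p1_mobius al be ga de) z = p1_mobius (ga + a * al) (de + a * be) al be z"
  proof (cases z)
    case None
    show ?thesis
    proof (cases "ga = 0")
      case True
      then have "al \<noteq> 0" using d by auto
      then show ?thesis using None True by (simp add: p1_add_def p1_inv_def p1_mobius_def)
    next
      case False
      show ?thesis
      proof (cases "al = 0")
        case True then show ?thesis using None False by (simp add: p1_add_def p1_inv_def p1_mobius_def)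
      next
        case al: False
        have "inverse (al / ga) + a = (ga + a * al) / al" using al False by (simp add: field_simps)
        then show ?thesis using None False al by (simp add: p1_add_def p1_inv_def p1_mobius_def)
      qed
    qed
  next
    case (Some c)
    have e1: "(ga + a * al) * c + (de + a * be) = (ga * c + de) + a * (al * c + be)"
      by (simp add: algebra_simps)
    show ?thesis
    proof (cases "ga * c + de = 0")
      case True
      then have de: "de = - (ga * c)" by (metis add.commute eq_neg_iff_add_eq_0)
      have n: "al * c + be \<noteq> 0"
      proof
        assume "al * c + be = 0"
        then have "be = - (al * c)" by (metis add.commute eq_neg_iff_add_eq_0)
        then show False using d de by (simp add: algebra_simps)
      qed
      have "(ga + a * al) * c + (de + a * be) = a * (al * c + be)" using e1 True by simp
      then have "((ga + a * al) * c + (de + a * be)) / (al * c + be) = a" using n by simp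
      then show ?thesis using Some True n by (simp add: p1_add_def p1_inv_def p1_mobius_def)
    next
      case False
      show ?thesis
      proof (cases "al * c + be = 0")
        case True then show ?thesis using Some False by (simp add: p1_add_def p1_inv_def p1_mobius_def)
      next
        case n: False
        have "inverse ((al * c + be) / (ga * c + de)) + a
            = ((ga + a * al) * c + (de + a * be)) / (al * c + be)"
          unfolding e1 using n False by (simp add: field_simps)
        then show ?thesis using Some False n by (simp add: p1_add_def p1_inv_def p1_mobius_def)
      qed
    qed
  qed
qed

lemma mobius_ex:
  "\<exists>al be ga de. al * de - be * ga \<noteq> (0::'a::field) \<and>
     comp_list (map (\<lambda>a. p1_add a \<circ> p1_inv) as) = p1_mobius al be ga de"
proof (induction as)
  case Nil
  have "id = p1_mobius (1::'a) 0 0 1"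
  proof
    fix z :: "'a option" show "id z = p1_mobius 1 0 0 1 z" by (cases z) (auto simp: p1_mobius_def)
  qed
  then show ?case by (intro exI[of _ 1] exI[of _ 0]) auto
next
  case (Cons a as)
  then obtain al be ga de where d: "al * de - be * ga \<noteq> (0::'a)"
    and e: "comp_list (map (\<lambda>a. p1_add a \<circ> p1_inv) as) = p1_mobius al be ga de" by blast
  have "(ga + a * al) * be - (de + a * be) * al = - (al * de - be * ga)"
    by (simp add: algebra_simps)
  then have "(ga + a * al) * be - (de + a * be) * al \<noteq> 0" using d by simp
  moreover have "comp_list (map (\<lambda>a. p1_add a \<circ> p1_inv) (a # as))
      = p1_mobius (ga + a * al) (de + a * be) al be"
    using mobius_step[OF d, of a] e by (simp only: comp_list_Cons list.map)
  ultimately show ?case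
    by (intro exI[of _ "ga + a * al"] exI[of _ "de + a * be"] exI[of _ al] exI[of _ be] conjI)
qed

theorem theorem3p3:
  fixes bs :: "'a::{field,finite} list" and k :: nat
  assumes "CARD('a) > 2" and "k \<ge> 1" and "length bs = k"
  defines "as \<equiv> G bs"
  defines "\<mu> \<equiv> comp_list (map (\<lambda>a. p1_add a \<circ> p1_inv) as)"
  shows "comp_list (map p1_transp bs)
           = \<mu> \<circ> comp_list (map (\<lambda>a. p1_pow_qm2 \<circ> p1_add (- a)) (rev as))
       \<and> (\<exists>al be ga de. al * de - be * ga \<noteq> 0 \<and> \<mu> = p1_mobius al be ga de)"
  using main[OF assms(1), of bs] mobius_ex[of as] unfolding as_def \<mu>_def by simp

end
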